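(* Let $G$, $k\ge 3$, the choice strings $c_{i,j}$, $L=k+1$ and $d=k-2$ be as in the construction in the context, and let $s$ be a string of length $L$ such that every choice string $c_{i,j}$ ($1\le i<j\le k$) has a substring of length $L$ at Hamming distance at most $d$ from $s$. Then each of the first $k$ positions of $s$ holds an encoding symbol and the last position of $s$ holds the synchronizing symbol $\#$.
   Context: Let $G=(V,E)$ be an undirected simple graph with $V=\{v_1,\dots,v_n\}$ and edge set $E=\{e_1,\dots,e_m\}$, and let $k\ge 3$ be an integer; put $N=\binom{k}{2}$. The alphabet consists of pairwise distinct symbols: encoding symbols $\sigma_1,\dots,\sigma_n$, string identification symbols $\varphi_1,\dots,\varphi_N$, and a synchronizing symbol $\#$. Order the pairs $(i,j)$ with $1\le i<j\le k$ lexicographically, $(1,2),(1,3),\dots,(1,k),(2,3),\dots,(k-1,k)$, and let $i'$ denote the position of $(i,j)$ in this order. For an edge $e$ joining $v_r$ and $v_s$ with $r<s$ define $\mathrm{block}(i,j,e)=\varphi_{i'}^{\,i-1}\,\sigma_r\,\varphi_{i'}^{\,j-i-1}\,\sigma_s\,\varphi_{i'}^{\,k-j}\,\#$ (a string of length $k+1$), and the choice string $c_{i,j}=\mathrm{block}(i,j,e_1)\,\varphi_{i'}^{\,k}\,\mathrm{block}(i,j,e_2)\,\varphi_{i'}^{\,k}\cdots\varphi_{i'}^{\,k}\,\mathrm{block}(i,j,e_m)$. Set $L=k+1$ and $d=k-2$. *)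

theory Defs
  imports Main
begin

text \<open>Symbols: Sig r is the encoding symbol sigma_r, Phi p the string identification
  symbol phi_p, Hash the synchronizing symbol.\<close>
datatype sym = Sig nat | Phi nat | Hash

definition alphabet :: "nat \<Rightarrow> nat \<Rightarrow> sym set" where
  "alphabet n k = {Sig r | r. 1 \<le> r \<and> r \<le> n} \<union> {Phi p | p. 1 \<le> p \<and> p \<le> k choose 2} \<union> {Hash}"

definition pair_index :: "nat \<Rightarrow> nat \<Rightarrow> nat \<Rightarrow> nat" where
  "pair_index k i j = card {(a, b). 1 \<le> a \<and> a < b \<and> b \<le> k \<and> (a < i \<or> (a = i \<and> b \<le> j))}"

text \<open>An edge is a pair (r,s) with r < s, joining v_r and v_s.\<close>
definition block :: "nat \<Rightarrow> nat \<Rightarrow> nat \<Rightarrow> nat \<times> nat \<Rightarrow> sym list" where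
  "block k i j e = (let p = Phi (pair_index k i j) in
     replicate (i - 1) p @ [Sig (fst e)] @ replicate (j - i - 1) p @ [Sig (snd e)]
       @ replicate (k - j) p @ [Hash])"

fun join :: "'a list \<Rightarrow> 'a list list \<Rightarrow> 'a list" where
  "join sep [] = []"
| "join sep [x] = x"
| "join sep (x # y # xs) = x @ sep @ join sep (y # xs)"

definition choice_string :: "nat \<Rightarrow> (nat \<times> nat) list \<Rightarrow> nat \<Rightarrow> nat \<Rightarrow> sym list" where
  "choice_string k es i j =
     join (replicate k (Phi (pair_index k i j))) (map (block k i j) es)"

definition hamming :: "'a list \<Rightarrow> 'a list \<Rightarrow> nat" where
  "hamming xs ys = length (filter (\<lambda>(x, y). x \<noteq> y) (zip xs ys))"

end

theory Submission imports Defs begin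

lemma join_nth:
  assumes "\<forall>x\<in>set xs. length x = L" "length sep = K" "a < length (join sep xs)" "L > 0"
  shows "a div (L+K) < length xs \<and> join sep xs ! a = (if a mod (L+K) < L then xs ! (a div (L+K)) ! (a mod (L+K)) else sep ! (a mod (L+K) - L))"
  using assms
proof (induction sep xs arbitrary: a rule: join.induct)
  case (1 sep)
  then show ?case by simp
next
  case (2 sep x)
  then show ?case by (simp add: nth_append)
next
  case (3 sep x y xs)
  show ?case
  proof (cases "a < L + K")
    case True
    have lx: "length x = L" using 3(2) by simp
    show ?thesis
    proof (cases "a < L")
      case True
      then show ?thesis using lx \<open>a < L + K\<close> by (simp add: nth_append)
    next
      case False
      then have "join sep (x # y # xs) ! a = sep ! (a - L)"
        using lx \<open>a < L + K\<close> 3(3) by (auto simp add: nth_append)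
      moreover have "a mod (L+K) = a" "a div (L+K) = 0" using \<open>a < L + K\<close> by auto
      ultimately show ?thesis using False by simp
    qed
  next
    case False
    define b where "b = a - (L+K)"
    have a: "a = b + (L+K)" using False b_def by simp
    have lb: "b < length (join sep (y # xs))" using 3(2-4) a by simp
    have IH: "b div (L+K) < length (y#xs) \<and> join sep (y#xs) ! b = (if b mod (L+K) < L then (y#xs) ! (b div (L+K)) ! (b mod (L+K)) else sep ! (b mod (L+K) - L))"
      using 3(1)[OF _ 3(3) lb 3(5)] 3(2) by simp
    have m: "a mod (L+K) = b mod (L+K)" using a by simp
    have d: "a div (L+K) = Suc (b div (L+K))" using a 3(5) by (simp add: div_add_self2)
    have "join sep (x # y # xs) ! a = join sep (y#xs) ! b"
      using a 3(2,3) by (simp add: nth_append)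
    then show ?thesis using IH m d by simp
  qed
qed
lemma block_nth:
  assumes "1 \<le> i" "i < j" "j \<le> k" "r \<le> k"
  shows "block k i j e ! r = (if r = i-1 then Sig (fst e) else if r = j-1 then Sig (snd e)
     else if r = k then Hash else Phi (pair_index k i j))"
  using assms unfolding block_def Let_def
  by (auto simp add: nth_append nth_replicate)

lemma window:
  assumes "1 \<le> i" "i < j" "j \<le> k" "choice_string k es i j = u @ t @ v" "length t = k+1"
  shows "\<exists>r0 < 2*k+1. \<forall>p\<le>k.
     ((r0+p) mod (2*k+1) = k \<longrightarrow> t!p = Hash) \<and>
     (((r0+p) mod (2*k+1) = i-1 \<or> (r0+p) mod (2*k+1) = j-1) \<longrightarrow> (\<exists>x. t!p = Sig x)) \<and>
     ((r0+p) mod (2*k+1) \<notin> {i-1,j-1,k} \<longrightarrow> t!p = Phi (pair_index k i j))"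
proof -
  define M where "M = 2*k+1"
  define r0 where "r0 = length u mod M"
  have M: "M = (k+1) + k" unfolding M_def by simp
  have "r0 < M" unfolding r0_def M_def by simp
  moreover have "((r0+p) mod M = k \<longrightarrow> t!p = Hash) \<and>
     (((r0+p) mod M = i-1 \<or> (r0+p) mod M = j-1) \<longrightarrow> (\<exists>x. t!p = Sig x)) \<and>
     ((r0+p) mod M \<notin> {i-1,j-1,k} \<longrightarrow> t!p = Phi (pair_index k i j))" if p: "p \<le> k" for p
  proof -
    define a where "a = length u + p"
    define c where "c = choice_string k es i j"
    have tp: "t ! p = c ! a" unfolding a_def c_def using assms(4,5) p by (simp add: nth_append)
    have al: "a < length c" unfolding a_def c_def using assms(4,5) p by simp
    have am: "a mod M = (r0 + p) mod M" unfolding a_def r0_def by (simp add: mod_add_left_eq)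
    have lens: "\<forall>x\<in>set (map (block k i j) es). length x = k+1"
      using assms(1-3) by (auto simp add: block_def Let_def)
    have J: "a div M < length (map (block k i j) es) \<and> c ! a = (if a mod M < k+1 then (map (block k i j) es) ! (a div M) ! (a mod M)
        else (replicate k (Phi (pair_index k i j))) ! (a mod M - (k+1)))"
      using join_nth[OF lens _ al[unfolded c_def choice_string_def], of k] M
      unfolding c_def choice_string_def by simp
    show ?thesis
    proof (cases "a mod M < k+1")
      case True
      then have "c ! a = block k i j (es ! (a div M)) ! (a mod M)" using J by simp
      then show ?thesis using block_nth[OF assms(1-3), of "a mod M" "es ! (a div M)"] True tp am assms(1-3) by auto
    next
      case False
      have "a mod M < M" unfolding M_def by simp
      then have lt: "a mod M - (k+1) < k" using M False by linarith
      have "c ! a = Phi (pair_index k i j)" using J False nth_replicate[OF lt] by simp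
      then show ?thesis using False tp am assms(1-3) by auto
    qed
  qed
  ultimately show ?thesis unfolding M_def by blast
qed


lemma fmod:
  fixes r0 p k :: nat
  assumes "r0 < 2*k+1" "p \<le> k"
  shows "(r0+p) mod (2*k+1) = (if r0+p < 2*k+1 then r0+p else r0+p-(2*k+1))"
proof (cases "r0+p < 2*k+1")
  case True then show ?thesis by simp
next
  case False
  then have "(r0+p) mod (2*k+1) = (r0+p-(2*k+1)) mod (2*k+1)" by (simp add: le_mod_geq)
  also have "\<dots> = r0+p-(2*k+1)" using assms by simp
  finally show ?thesis using False by simp
qed

lemma matches3:
  assumes "length t = k+1" "hamming t s \<le> k-2" "length s = k+1" "k \<ge> 3"
  shows "3 \<le> card {p. p\<le>k \<and> t!p = s!p}"
proof -
  define D where "D = {p. p\<le>k \<and> t!p \<noteq> s!p}"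
  have "hamming t s = card {p. p < length (zip t s) \<and> (\<lambda>(x, y). x \<noteq> y) (zip t s ! p)}"
    unfolding hamming_def by (rule length_filter_conv_card)
  also have "\<dots> = card D" unfolding D_def using assms(1,3)
    by (intro arg_cong[where f=card]) auto
  finally have hD: "card D \<le> k - 2" using assms(2) by simp
  have U: "{p. p\<le>k \<and> t!p = s!p} \<union> D = {..k}" unfolding D_def by auto
  have "card ({p. p\<le>k \<and> t!p = s!p} \<union> D) = card {p. p\<le>k \<and> t!p = s!p} + card D"
    by (rule card_Un_disjoint) (auto simp: D_def)
  then show ?thesis using U hD assms(4) by simp
qed

lemma pair_facts:
  assumes "1 \<le> i" "i<j" "j\<le>k" "choice_string k es i j = u @ t @ v" "length t = k+1"
    "hamming t s \<le> k-2" "length s = k+1" "k \<ge> 3"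
  shows "3 \<le> card {p. p\<le>k \<and> s!p = Phi (pair_index k i j)} + card {p. p\<le>k \<and> (\<forall>q. s!p \<noteq> Phi q)}"
    and "{p. p\<le>k \<and> s!p = Phi (pair_index k i j)} = {} \<Longrightarrow>
      \<exists>t0\<le>i-1. s!(k-t0) = Hash \<and> (\<exists>x. s!(i-1-t0) = Sig x) \<and> (\<exists>x. s!(j-1-t0) = Sig x)"
proof -
  define q where "q = pair_index k i j"
  define Mt where "Mt = {p. p\<le>k \<and> t!p = s!p}"
  define P where "P = {p. p\<le>k \<and> s!p = Phi q}"
  define NP where "NP = {p. p\<le>k \<and> (\<forall>q. s!p \<noteq> Phi q)}"
  have m3: "3 \<le> card Mt" unfolding Mt_def using matches3 assms(5-8) by blast
  obtain r0 where r0: "r0 < 2*k+1" and W: "\<forall>p\<le>k.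
     ((r0+p) mod (2*k+1) = k \<longrightarrow> t!p = Hash) \<and>
     (((r0+p) mod (2*k+1) = i-1 \<or> (r0+p) mod (2*k+1) = j-1) \<longrightarrow> (\<exists>x. t!p = Sig x)) \<and>
     ((r0+p) mod (2*k+1) \<notin> {i-1,j-1,k} \<longrightarrow> t!p = Phi q)"
    using window[OF assms(1-5)] unfolding q_def by blast
  have tsym: "t!p = Phi q \<or> (\<forall>q'. t!p \<noteq> Phi q')" if "p \<le> k" for p
    using W that by (cases "(r0+p) mod (2*k+1) = k"; cases "(r0+p) mod (2*k+1) = i-1";
       cases "(r0+p) mod (2*k+1) = j-1") auto
  have "Mt \<subseteq> P \<union> NP"
  proof
    fix p assume "p \<in> Mt"
    then have "p \<le> k" "t!p = s!p" unfolding Mt_def by auto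
    then show "p \<in> P \<union> NP" using tsym[of p] unfolding P_def NP_def by auto
  qed
  then have "card Mt \<le> card (P \<union> NP)" by (intro card_mono) (auto simp: P_def NP_def)
  also have "\<dots> \<le> card P + card NP" by (rule card_Un_le)
  finally show "3 \<le> card {p. p\<le>k \<and> s!p = Phi (pair_index k i j)} + card {p. p\<le>k \<and> (\<forall>q. s!p \<noteq> Phi q)}"
    using m3 unfolding P_def NP_def q_def by simp
  assume Pe: "{p. p\<le>k \<and> s!p = Phi (pair_index k i j)} = {}"
  define f where "f p = (r0+p) mod (2*k+1)" for p
  define NT where "NT = {p. p\<le>k \<and> f p \<in> {i-1,j-1,k}}"
  have "Mt \<subseteq> NT"
  proof
    fix p assume "p \<in> Mt"
    then have p: "p \<le> k" "t!p = s!p" unfolding Mt_def by auto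
    show "p \<in> NT"
    proof (rule ccontr)
      assume "p \<notin> NT"
      then have "t!p = Phi q" using W p unfolding NT_def f_def by auto
      then show False using Pe p unfolding q_def by auto
    qed
  qed
  have inj: "inj_on f NT"
  proof (rule inj_onI)
    fix x y assume "x \<in> NT" "y \<in> NT" "f x = f y"
    then show "x = y" using fmod[OF r0, of x] fmod[OF r0, of y] unfolding NT_def f_def
      by (auto split: if_splits)
  qed
  have fNT: "f ` NT \<subseteq> {i-1,j-1,k}" unfolding NT_def by auto
  have "i-1 \<noteq> j-1" "i-1 \<noteq> k" "j-1 \<noteq> k" using assms(1-3) by auto
  then have c3: "card {i-1,j-1,k} = 3" by simp
  have finNT: "finite NT" unfolding NT_def by auto
  have "card NT = card (f ` NT)" using card_image[OF inj] by simp
  also have "\<dots> \<le> 3" using card_mono[OF _ fNT] c3 by simp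
  finally have "card NT \<le> 3" .
  moreover have "card Mt \<le> card NT" using card_mono[OF finNT \<open>Mt \<subseteq> NT\<close>] .
  ultimately have "card NT = 3" "card Mt = card NT" using m3 by auto
  then have MtNT: "Mt = NT" using card_subset_eq[OF finNT \<open>Mt \<subseteq> NT\<close>] by simp
  have "f ` NT = {i-1,j-1,k}"
    using card_subset_eq[OF _ fNT] c3 \<open>card NT = 3\<close> card_image[OF inj] by simp
  then have "k \<in> f ` NT" "i-1 \<in> f ` NT" "j-1 \<in> f ` NT" by auto
  then obtain pH p1 p2 where H: "pH \<in> NT" "f pH = k" and S1: "p1 \<in> NT" "f p1 = i-1"
     and S2: "p2 \<in> NT" "f p2 = j-1" by (metis imageE)
  have pk: "pH \<le> k" "p1 \<le> k" "p2 \<le> k" using H S1 S2 unfolding NT_def by auto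
  have a1: "r0 + pH = k" using fmod[OF r0 pk(1)] H(2) pk(1) r0 unfolding f_def by (auto split: if_splits)
  have a2: "r0 + p1 = i-1" using fmod[OF r0 pk(2)] S1(2) pk a1 r0 assms(1-3) unfolding f_def by (auto split: if_splits)
  have a3: "r0 + p2 = j-1" using fmod[OF r0 pk(3)] S2(2) pk a1 r0 assms(1-3) unfolding f_def by (auto split: if_splits)
  have E: "s!pH = t!pH" "s!p1 = t!p1" "s!p2 = t!p2" using H(1) S1(1) S2(1) MtNT unfolding Mt_def by auto
  have T: "t!pH = Hash" "\<exists>x. t!p1 = Sig x" "\<exists>x. t!p2 = Sig x"
    using W pk H(2) S1(2) S2(2) unfolding f_def by auto
  show "\<exists>t0\<le>i-1. s!(k-t0) = Hash \<and> (\<exists>x. s!(i-1-t0) = Sig x) \<and> (\<exists>x. s!(j-1-t0) = Sig x)"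
  proof -
    have e: "k - r0 = pH" "i-1-r0 = p1" "j-1-r0 = p2" "r0 \<le> i-1" using a1 a2 a3 by auto
    have h1: "s!(k-r0) = Hash" using E(1) T(1) e(1) by simp
    have h2: "\<exists>x. s!(i-1-r0) = Sig x" using E(2) T(2) e(2) by simp
    have h3: "\<exists>x. s!(j-1-r0) = Sig x" using E(3) T(3) e(3) by simp
    show ?thesis using h1 h2 h3 e(4) by blast
  qed
qed


lemma pair_index_less:
  assumes "1 \<le> i" "i < j" "j \<le> k" "1 \<le> i'" "i' < j'" "j' \<le> k" "i < i' \<or> (i = i' \<and> j < j')"
  shows "pair_index k i j < pair_index k i' j'"
proof -
  define S where "S i j = {(a, b). 1 \<le> a \<and> a < b \<and> b \<le> k \<and> (a < i \<or> (a = i \<and> b \<le> j))}" for i j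
  have fin: "finite (S i' j')" unfolding S_def
    by (rule finite_subset[of _ "{0..k} \<times> {0..k}"]) auto
  have "S i j \<subset> S i' j'"
  proof
    show "S i j \<subseteq> S i' j'" unfolding S_def using assms(7) by auto
    have "(i', j') \<in> S i' j'" "(i', j') \<notin> S i j" unfolding S_def using assms by auto
    then show "S i j \<noteq> S i' j'" by blast
  qed
  then have "card (S i j) < card (S i' j')" using psubset_card_mono fin by blast
  then show ?thesis unfolding pair_index_def S_def by simp
qed

lemma pair_index_inj:
  assumes "1 \<le> i" "i < j" "j \<le> k" "1 \<le> i'" "i' < j'" "j' \<le> k"
    "pair_index k i j = pair_index k i' j'"
  shows "i = i' \<and> j = j'"
proof (rule ccontr)
  assume "\<not> (i = i' \<and> j = j')"
  then have "(i < i' \<or> (i = i' \<and> j < j')) \<or> (i' < i \<or> (i' = i \<and> j' < j))" by auto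
  then show False using pair_index_less[OF assms(1-6)] pair_index_less[OF assms(4-6) assms(1-3)] assms(7)
    by auto
qed


theorem lemma2:
  fixes n k :: nat and es :: "(nat \<times> nat) list" and s :: "sym list"
  assumes edges: "\<forall>(r, t) \<in> set es. 1 \<le> r \<and> r < t \<and> t \<le> n"
    and simple: "distinct es"
    and k3: "k \<ge> 3"
    and s_alph: "set s \<subseteq> alphabet n k"
    and s_len: "length s = k + 1"
    and close: "\<forall>i j. 1 \<le> i \<and> i < j \<and> j \<le> k \<longrightarrow>
        (\<exists>u t v. choice_string k es i j = u @ t @ v \<and> length t = k + 1 \<and> hamming t s \<le> k - 2)"
  shows "(\<forall>p < k. \<exists>r. 1 \<le> r \<and> r \<le> n \<and> s ! p = Sig r) \<and> s ! k = Hash"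
proof -
  define idx where "idx i j = pair_index k i j" for i j
  define P where "P q = {p. p\<le>k \<and> s!p = Phi q}" for q
  define NP where "NP = {p. p\<le>k \<and> (\<forall>q. s!p \<noteq> Phi q)}"
  have finP: "finite (P q)" for q unfolding P_def by auto
  have finNP: "finite NP" unfolding NP_def by auto
  have K1: "3 \<le> card (P (idx i j)) + card NP" if ij: "1 \<le> i" "i < j" "j \<le> k" for i j
  proof -
    obtain u t v where "choice_string k es i j = u @ t @ v" "length t = k + 1" "hamming t s \<le> k - 2"
      using close[rule_format, OF conjI[OF ij(1) conjI[OF ij(2) ij(3)]]] by blast
    from pair_facts(1)[OF that this s_len k3] show ?thesis unfolding P_def NP_def idx_def .
  qed
  have K2: "\<exists>t0\<le>i-1. s!(k-t0) = Hash \<and> (\<exists>x. s!(i-1-t0) = Sig x) \<and> (\<exists>x. s!(j-1-t0) = Sig x)"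
    if ij: "1 \<le> i" "i < j" "j \<le> k" "P (idx i j) = {}" for i j
  proof -
    obtain u t v where "choice_string k es i j = u @ t @ v" "length t = k + 1" "hamming t s \<le> k - 2"
      using close[rule_format, OF conjI[OF ij(1) conjI[OF ij(2) ij(3)]]] by blast
    from pair_facts(2)[OF that(1-3) this s_len k3] that(4) show ?thesis unfolding P_def idx_def by blast
  qed
  have idx_inj: "i = i' \<and> j = j'" if "1 \<le> i" "i < j" "j \<le> k" "1 \<le> i'" "i' < j'" "j' \<le> k"
    "idx i j = idx i' j'" for i j i' j'
    using pair_index_inj that unfolding idx_def by blast
  have Pdisj: "P q \<inter> P q' = {}" if "q \<noteq> q'" for q q' using that unfolding P_def by auto
  have PNP: "P q \<inter> NP = {}" for q unfolding P_def NP_def by auto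
  have "\<exists>j. 2 \<le> j \<and> j \<le> k \<and> P (idx 1 j) = {}"
  proof (rule ccontr)
    assume "\<not> ?thesis"
    then have ne: "P (idx 1 j) \<noteq> {}" if "2 \<le> j" "j \<le> k" for j using that by auto
    define A where "A = (\<Union>j\<in>{2..k}. P (idx 1 j))"
    have cA: "card A = (\<Sum>j\<in>{2..k}. card (P (idx 1 j)))" unfolding A_def
    proof (rule card_UN_disjoint)
      show "\<forall>j\<in>{2..k}. \<forall>j'\<in>{2..k}. j \<noteq> j' \<longrightarrow> P (idx 1 j) \<inter> P (idx 1 j') = {}"
        using idx_inj[of 1 _ 1] Pdisj by (metis atLeastAtMost_iff le_numeral_extra(4) one_less_numeral_iff
             semiring_norm(76) order_less_le_trans)
    qed (auto simp: finP)
    have "(\<Sum>j\<in>{2..k}. 1) \<le> (\<Sum>j\<in>{2..k}. card (P (idx 1 j)))"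
      using ne finP by (intro sum_mono) (simp add: Suc_leI card_gt_0_iff)
    then have cA2: "k - 1 \<le> card A" using cA by simp
    have AB: "A \<inter> P (idx 2 3) = {}"
    proof -
      have "idx 1 j \<noteq> idx 2 3" if "j \<in> {2..k}" for j
        using idx_inj[of 1 j 2 3] that k3 by auto
      then show ?thesis unfolding A_def using Pdisj by blast
    qed
    have AC: "A \<inter> NP = {}" unfolding A_def using PNP by blast
    have finA: "finite A" unfolding A_def using finP by auto
    have "card (A \<union> P (idx 2 3) \<union> NP) = card A + card (P (idx 2 3)) + card NP"
      using AB AC PNP finA finP finNP by (simp add: card_Un_disjoint Int_Un_distrib2)
    moreover have "A \<union> P (idx 2 3) \<union> NP \<subseteq> {..k}" unfolding A_def P_def NP_def by auto
    then have "card (A \<union> P (idx 2 3) \<union> NP) \<le> k + 1"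
      using card_mono[of "{..k}"] by fastforce
    moreover have "3 \<le> card (P (idx 2 3)) + card NP" using K1[of 2 3] k3 by simp
    ultimately show False using cA2 k3 by linarith
  qed
  then obtain j0 where j0: "2 \<le> j0" "j0 \<le> k" "P (idx 1 j0) = {}" by blast
  from K2[of 1 j0] j0 have sk: "s!k = Hash" and s0: "\<exists>x. s!0 = Sig x" by auto
  define X where "X = {p. p < k \<and> \<not>(\<exists>x. s!p = Sig x)}"
  have finX: "finite X" unfolding X_def by auto
  have X1: "1 \<le> p" if "p \<in> X" for p using that s0 unfolding X_def by (cases p) auto
  have Xne: "P (idx 1 (p+1)) \<noteq> {}" if "p \<in> X" for p
  proof
    assume "P (idx 1 (p+1)) = {}"
    from K2[OF _ _ _ this] X1[OF that] that show False unfolding X_def by auto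
  qed
  have PX: "P q \<subseteq> X" for q
  proof
    fix x assume "x \<in> P q"
    then have "x \<le> k" "s!x = Phi q" unfolding P_def by auto
    then show "x \<in> X" using sk unfolding X_def by (cases "x = k") auto
  qed
  define U where "U = (\<Union>p\<in>X. P (idx 1 (p+1)))"
  have cU: "card U = (\<Sum>p\<in>X. card (P (idx 1 (p+1))))" unfolding U_def
  proof (rule card_UN_disjoint)
    show "\<forall>p\<in>X. \<forall>p'\<in>X. p \<noteq> p' \<longrightarrow> P (idx 1 (p+1)) \<inter> P (idx 1 (p'+1)) = {}"
    proof (intro ballI impI)
      fix p p' assume "p \<in> X" "p' \<in> X" "p \<noteq> p'"
      then have "idx 1 (p+1) \<noteq> idx 1 (p'+1)" using idx_inj[of 1 "p+1" 1 "p'+1"] X1 unfolding X_def by auto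
      then show "P (idx 1 (p+1)) \<inter> P (idx 1 (p'+1)) = {}" using Pdisj by blast
    qed
  qed (auto simp: finX finP)
  have "(\<Sum>p\<in>X. 1) \<le> (\<Sum>p\<in>X. card (P (idx 1 (p+1))))"
    using Xne finP by (intro sum_mono) (simp add: Suc_leI card_gt_0_iff)
  then have "card X \<le> card U" using cU by simp
  moreover have "U \<subseteq> X" unfolding U_def using PX by blast
  ultimately have UX: "U = X" using card_subset_eq[OF finX] card_mono[OF finX] by (metis le_antisym)
  have XPhi: "\<exists>p'\<in>X. s!x = Phi (idx 1 (p'+1))" if "x \<in> X" for x
    using that UX unfolding U_def P_def by auto
  have Xe: "X = {}"
  proof (rule ccontr)
    assume "X \<noteq> {}"
    then obtain p where p: "p \<in> X" by blast
    have pk: "1 \<le> p" "p < k" using X1[OF p] p unfolding X_def by auto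
    define i where "i = (2::nat)"
    define j where "j = (if p + 1 \<ge> 3 then p + 1 else 3)"
    have ij: "1 \<le> i" "i < j" "j \<le> k" using pk k3 unfolding i_def j_def by auto
    have Pe: "P (idx i j) = {}"
    proof (rule ccontr)
      assume "P (idx i j) \<noteq> {}"
      then obtain x where x: "x \<in> P (idx i j)" by blast
      then have "x \<in> X" using PX by blast
      then obtain p' where "p' \<in> X" "s!x = Phi (idx 1 (p'+1))" using XPhi by blast
      moreover have "s!x = Phi (idx i j)" using x unfolding P_def by auto
      ultimately have "idx i j = idx 1 (p'+1)" by simp
      then show False using idx_inj[OF ij, of 1 "p'+1"] X1[OF \<open>p' \<in> X\<close>] \<open>p' \<in> X\<close>
        unfolding X_def i_def by auto
    qed
    obtain t0 where t0: "t0 \<le> i-1" "s!(k-t0) = Hash" "\<exists>x. s!(i-1-t0) = Sig x" "\<exists>x. s!(j-1-t0) = Sig x"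
      using K2[OF ij Pe] by blast
    have "t0 = 0"
    proof (rule ccontr)
      assume "t0 \<noteq> 0"
      then have "t0 = 1" using t0(1) unfolding i_def by simp
      then have "k - 1 \<in> X" using t0(2) k3 unfolding X_def by auto
      then show False using XPhi t0(2) \<open>t0 = 1\<close> by fastforce
    qed
    have "\<exists>x. s!p = Sig x"
    proof (cases "p + 1 \<ge> 3")
      case True
      then have "j - 1 - t0 = p" using \<open>t0 = 0\<close> unfolding j_def by simp
      then show ?thesis using t0(4) by simp
    next
      case False
      then have "i - 1 - t0 = p" using \<open>t0 = 0\<close> pk unfolding i_def by simp
      then show ?thesis using t0(3) by simp
    qed
    then show False using p unfolding X_def by auto
  qed
  have "\<exists>r. 1 \<le> r \<and> r \<le> n \<and> s ! p = Sig r" if pk: "p < k" for p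
  proof -
    obtain x where x: "s!p = Sig x" using Xe pk unfolding X_def by auto
    have "s!p \<in> set s" using pk s_len by simp
    then have "Sig x \<in> alphabet n k" using s_alph x by auto
    then show ?thesis using x unfolding alphabet_def by auto
  qed
  then show ?thesis using sk by blast
qed

end
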